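(* If a perfect 2-D $(u\times v,4,2)$-OOC exists (equivalently, a strictly $v$-cyclic $SQS(u\times v)$), then $uv\equiv 2,4\pmod 6$ and $u(uv-1)(uv-2)\equiv 0\pmod{24}$. Equivalently, one of the following holds: (1) $u\equiv 1,5\pmod{12}$ and $v\equiv 2,10\pmod{24}$; (2) $u\equiv 7,11\pmod{12}$ and $v\equiv 14,22\pmod{24}$; (3) $u\equiv 2,4\pmod 6$ and $v\equiv 1,5\pmod 6$; (4) $u\equiv 4,8\pmod{12}$ and $v\equiv 2,4\pmod 6$.
   Context: A 2-D $(u\times v,4,2)$-OOC is a family $\mathcal C$ of $u\times v$ $(0,1)$-matrices of Hamming weight $4$ such that for all $A=(a_{ij}),B=(b_{ij})\in\mathcal C$ and every integer $r$ with $A\ne B$ or $r\not\equiv0\pmod v$, $\sum_{i,j}a_{ij}b_{i,j+r}\le 2$ (column indices mod $v$). It is perfect if, identifying each matrix with its support in $I_u\times Z_v$ ($I_u=\{0,\dots,u-1\}$), the supports of all $v$ cyclic column shifts of all codewords cover every $3$-subset of $I_u\times Z_v$ exactly once; equivalently its size is $u(uv-1)(uv-2)/24$. This is the same as a strictly $v$-cyclic Steiner quadruple system $SQS(u\times v)$ on $I_u\times Z_v$ (a set of $4$-subsets, closed under $(i,x)\mapsto(i,x+1)$, covering every $3$-subset exactly once, with each block having trivial stabilizer in $Z_v$). *)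

theory Defs
  imports Main
begin

text \<open>Point set I_u x Z_v, with Z_v represented by {0..<v}.\<close>
definition pts :: "nat \<Rightarrow> nat \<Rightarrow> (nat \<times> nat) set" where
  "pts u v = {0..<u} \<times> {0..<v}"

definition shift :: "nat \<Rightarrow> nat \<Rightarrow> nat \<times> nat \<Rightarrow> nat \<times> nat" where
  "shift v r = (\<lambda>(i, x). (i, (x + r) mod v))"

text \<open>2-D (u x v,4,2)-OOC, codewords identified with their supports.
  The correlation sum of A and B at shift r is the number of (i,j) in A with (i,j+r) in B.\<close>
definition is_OOC :: "nat \<Rightarrow> nat \<Rightarrow> (nat \<times> nat) set set \<Rightarrow> bool" where
  "is_OOC u v C \<longleftrightarrow>
     (\<forall>A\<in>C. A \<subseteq> pts u v \<and> card A = 4) \<and>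
     (\<forall>A\<in>C. \<forall>B\<in>C. \<forall>r<v. (A \<noteq> B \<or> r \<noteq> 0) \<longrightarrow>
        card {(i, j). (i, j) \<in> A \<and> (i, (j + r) mod v) \<in> B} \<le> 2)"

text \<open>Perfect: the v cyclic shifts of all codewords cover every 3-subset exactly once
  (counted over pairs (codeword, shift)).\<close>
definition perfect_OOC :: "nat \<Rightarrow> nat \<Rightarrow> (nat \<times> nat) set set \<Rightarrow> bool" where
  "perfect_OOC u v C \<longleftrightarrow> is_OOC u v C \<and>
     (\<forall>T. T \<subseteq> pts u v \<and> card T = 3 \<longrightarrow>
        card {(A, r). A \<in> C \<and> r < v \<and> T \<subseteq> shift v r ` A} = 1)"

definition strictly_cyclic_SQS :: "nat \<Rightarrow> nat \<Rightarrow> (nat \<times> nat) set set \<Rightarrow> bool" where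
  "strictly_cyclic_SQS u v \<B> \<longleftrightarrow>
     (\<forall>B\<in>\<B>. B \<subseteq> pts u v \<and> card B = 4) \<and>
     (\<forall>B\<in>\<B>. shift v 1 ` B \<in> \<B>) \<and>
     (\<forall>T. T \<subseteq> pts u v \<and> card T = 3 \<longrightarrow> (\<exists>!B. B \<in> \<B> \<and> T \<subseteq> B)) \<and>
     (\<forall>B\<in>\<B>. \<forall>r<v. shift v r ` B = B \<longrightarrow> r = 0)"

end

theory Submission
  imports Defs
begin

lemma supersets_card:
  assumes "finite A" "S \<subseteq> A" "card S \<le> 3"
  shows "card {T. T \<subseteq> A \<and> S \<subseteq> T \<and> card T = 3} = (card A - card S) choose (3 - card S)"
proof -
  have fS: "finite S" using assms finite_subset by blast
  have "bij_betw (\<lambda>X. X \<union> S) {X. X \<subseteq> A - S \<and> card X = 3 - card S} {T. T \<subseteq> A \<and> S \<subseteq> T \<and> card T = 3}"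
  proof (rule bij_betw_byWitness[where f'="\<lambda>T. T - S"])
    show "\<forall>a\<in>{X. X \<subseteq> A - S \<and> card X = 3 - card S}. a \<union> S - S = a" by auto
    show "\<forall>a'\<in>{T. T \<subseteq> A \<and> S \<subseteq> T \<and> card T = 3}. a' - S \<union> S = a'" by auto
    show "(\<lambda>X. X \<union> S) ` {X. X \<subseteq> A - S \<and> card X = 3 - card S} \<subseteq> {T. T \<subseteq> A \<and> S \<subseteq> T \<and> card T = 3}"
    proof safe
      fix X assume X: "X \<subseteq> A - S" "card (X::'a set) = 3 - card S"
      have "finite X" using X assms finite_subset by blast
      then have "card (X \<union> S) = card X + card S" using X fS by (subst card_Un_disjoint) auto
      then show "card (X \<union> S) = 3" using X assms by simp
    qed (use assms in auto)
    show "(\<lambda>T. T - S) ` {T. T \<subseteq> A \<and> S \<subseteq> T \<and> card T = 3} \<subseteq> {X. X \<subseteq> A - S \<and> card X = 3 - card S}"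
      using fS by (auto simp: card_Diff_subset)
  qed
  then have "card {T. T \<subseteq> A \<and> S \<subseteq> T \<and> card T = 3} = card {X. X \<subseteq> A - S \<and> card X = 3 - card S}"
    by (simp add: bij_betw_same_card)
  also have "\<dots> = card (A - S) choose (3 - card S)"
    using assms by (intro n_subsets) auto
  also have "card (A - S) = card A - card S" using assms fS by (simp add: card_Diff_subset)
  finally show ?thesis .
qed

lemma count_gen:
  fixes P :: "'a set" and I :: "'b set" and g :: "'b \<Rightarrow> 'a set"
  assumes fP: "finite P" and fI: "finite I"
  and gP: "\<And>i. i\<in>I \<Longrightarrow> g i \<subseteq> P" and g4: "\<And>i. i\<in>I \<Longrightarrow> card (g i) = 4"
  and uniq: "\<And>T. T \<subseteq> P \<Longrightarrow> card T = 3 \<Longrightarrow> card {i\<in>I. T \<subseteq> g i} = 1"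
  and S: "S \<subseteq> P" "card S \<le> 3"
  shows "(card P - card S) choose (3 - card S) = ((4 - card S) choose (3 - card S)) * card {i\<in>I. S \<subseteq> g i}"
proof -
  define Ts where "Ts = {T. T \<subseteq> P \<and> S \<subseteq> T \<and> card T = 3}"
  have fTs: "finite Ts" unfolding Ts_def using fP by (auto intro: finite_subset[of _ "Pow P"])
  have cTs: "card Ts = (card P - card S) choose (3 - card S)"
    unfolding Ts_def using supersets_card fP S by blast
  have fi: "card {T\<in>Ts. T \<subseteq> g i} = (if S \<subseteq> g i then (4 - card S) choose (3 - card S) else 0)" if i: "i \<in> I" for i
  proof (cases "S \<subseteq> g i")
    case True
    have fg: "finite (g i)" using gP[OF i] fP finite_subset by blast
    have "{T\<in>Ts. T \<subseteq> g i} = {T. T \<subseteq> g i \<and> S \<subseteq> T \<and> card T = 3}"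
      unfolding Ts_def using gP[OF i] by auto
    then show ?thesis using supersets_card[OF fg True S(2)] g4[OF i] True by simp
  next
    case False
    have e: "{T\<in>Ts. T \<subseteq> g i} = {}" unfolding Ts_def using False by auto
    show ?thesis using False by (simp only: e card.empty if_False)
  qed
  have "(\<Sum>i\<in>I. card {T\<in>Ts. T \<subseteq> g i}) = (\<Sum>i\<in>I. \<Sum>T\<in>Ts. if T \<subseteq> g i then 1 else 0)"
    using fTs by (simp add: sum.inter_filter[symmetric])
  also have "\<dots> = (\<Sum>T\<in>Ts. \<Sum>i\<in>I. if T \<subseteq> g i then 1 else 0)"
    by (rule sum.swap)
  also have "\<dots> = (\<Sum>T\<in>Ts. card {i\<in>I. T \<subseteq> g i})"
    using fI by (simp add: sum.inter_filter[symmetric])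
  also have "\<dots> = (\<Sum>T\<in>Ts. 1)"
    by (rule sum.cong) (auto simp: Ts_def uniq)
  finally have eq: "(\<Sum>i\<in>I. card {T\<in>Ts. T \<subseteq> g i}) = card Ts" by simp
  have "(\<Sum>i\<in>I. card {T\<in>Ts. T \<subseteq> g i}) = (\<Sum>i\<in>I. if S \<subseteq> g i then (4 - card S) choose (3 - card S) else 0)"
    by (rule sum.cong) (auto simp: fi)
  also have "\<dots> = (\<Sum>i\<in>{i\<in>I. S \<subseteq> g i}. (4 - card S) choose (3 - card S))"
    using fI by (simp only: sum.inter_filter)
  also have "\<dots> = ((4 - card S) choose (3 - card S)) * card {i\<in>I. S \<subseteq> g i}" by simp
  finally show ?thesis using eq cTs by simp
qed

lemma choose3: "6 * (n choose 3) = n * (n - 1) * (n - 2)"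
proof (induction n)
  case 0 then show ?case by simp
next
  case (Suc n)
  have "Suc n choose 3 = (n choose 2) + (n choose 3)"
    by (simp add: numeral_3_eq_3 numeral_2_eq_2)
  moreover have "2 * (n choose 2) = n * (n - 1)"
  proof -
    have "even (n * (n - 1))" by auto
    then show ?thesis by (simp add: choose_two)
  qed
  ultimately have "6 * (Suc n choose 3) = 3 * (n * (n - 1)) + n * (n - 1) * (n - 2)"
    using Suc.IH by simp
  also have "\<dots> = Suc n * (Suc n - 1) * (Suc n - 2)"
  proof (cases "n \<le> 1")
    case True then have "n = 0 \<or> n = 1" by auto
    then show ?thesis by auto
  next
    case False
    define m where "m = n - 2"
    have "n = Suc (Suc m)" using False m_def by simp
    then show ?thesis by (simp add: algebra_simps)
  qed
  finally show ?case .
qed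
lemma c43: "(4::nat) choose 3 = 4" by (simp add: numeral_eq_Suc)
lemma c32: "(3::nat) choose 2 = 3" by (simp add: numeral_eq_Suc)
lemma arith1: "(n::nat) \<ge> 2 \<Longrightarrow> n - 2 = 2 * k \<Longrightarrow> even n"
  by presburger
lemma arith2: "(n::nat) \<ge> 2 \<Longrightarrow> even n \<Longrightarrow> (n - 1) choose 2 = 3 * k \<Longrightarrow> n mod 3 \<noteq> 0"
proof
  assume n: "n \<ge> 2" "even n" "(n - 1) choose 2 = 3 * k" "n mod 3 = 0"
  obtain m where m: "n = 3 * m" using n(4) by auto
  obtain j where j: "m = Suc j" using n m by (cases m) auto
  have "2 * ((n - 1) choose 2) = (n - 1) * (n - 2)"
  proof -
    have e: "even ((n - 1) * (n - 2))" by auto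
    have "(n - 1) choose 2 = (n - 1) * (n - 2) div 2"
    proof -
      have "n - 1 - 1 = n - 2" by arith
      then show ?thesis using choose_two[of "n - 1"] by metis
    qed
    then show ?thesis using e by (simp add: dvd_mult_div_cancel)
  qed
  then have "(n - 1) * (n - 2) = 6 * k" using n(3) by simp
  moreover have "(n - 1) * (n - 2) = 3 * (3 * j * j + 3 * j) + 2"
    using m j by (simp add: algebra_simps)
  ultimately show False by presburger
qed
lemma design_facts:
  fixes P :: "'a set" and I :: "'b set" and g :: "'b \<Rightarrow> 'a set"
  assumes fP: "finite P" and fI: "finite I"
  and gP: "\<And>i. i\<in>I \<Longrightarrow> g i \<subseteq> P" and g4: "\<And>i. i\<in>I \<Longrightarrow> card (g i) = 4"
  and uniq: "\<And>T. T \<subseteq> P \<Longrightarrow> card T = 3 \<Longrightarrow> card {i\<in>I. T \<subseteq> g i} = 1"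
  and n2: "2 \<le> card P"
  shows "card P mod 6 = 2 \<or> card P mod 6 = 4"
    and "card P * (card P - 1) * (card P - 2) = 24 * card I"
proof -
  note cg = count_gen[OF fP fI gP g4 uniq]
  have h0: "(card P - card ({}::'a set)) choose (3 - card ({}::'a set)) = ((4 - card ({}::'a set)) choose (3 - card ({}::'a set))) * card {i\<in>I. {} \<subseteq> g i}"
    by (rule cg) auto
  have "{i\<in>I. {} \<subseteq> g i} = I" by blast
  then have "card P choose 3 = 4 * card I" using h0 by (simp only: card.empty diff_zero c43)
  then show "card P * (card P - 1) * (card P - 2) = 24 * card I"
    using choose3[of "card P"] by simp
  have "P \<noteq> {}" using n2 by (metis card.empty not_numeral_le_zero)
  then obtain p where p: "p \<in> P" by blast
  have "card (P - {p}) \<ge> 1" using n2 p fP by simp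
  then have "P - {p} \<noteq> {}" by (metis card.empty not_one_le_zero)
  then obtain q where q: "q \<in> P - {p}" by blast
  have c2: "card {p, q} = 2" using q by auto
  have h2: "(card P - card {p,q}) choose (3 - card {p,q}) = ((4 - card {p,q}) choose (3 - card {p,q})) * card {i\<in>I. {p,q} \<subseteq> g i}"
    by (rule cg) (use p q c2 in auto)
  have "card P - 2 = 2 * card {i\<in>I. {p,q} \<subseteq> g i}"
    using h2 unfolding c2 by simp
  then have ev: "even (card P)" using n2 arith1 by blast
  have h1: "(card P - card {p}) choose (3 - card {p}) = ((4 - card {p}) choose (3 - card {p})) * card {i\<in>I. {p} \<subseteq> g i}"
    by (rule cg) (use p in auto)
  have "(card P - 1) choose 2 = 3 * card {i\<in>I. {p} \<subseteq> g i}"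
    using h1 by (simp add: c32)
  then have "card P mod 3 \<noteq> 0" using arith2 n2 ev by blast
  then show "card P mod 6 = 2 \<or> card P mod 6 = 4" using ev by presburger
qed


lemma shift_comp: "shift v a (shift v b p) = shift v (a + b) p"
  by (cases p) (simp add: shift_def mod_simps ac_simps)

lemma shift_mod: "shift v (k mod v) p = shift v k p"
  by (cases p) (simp add: shift_def mod_add_right_eq)

lemma shift_0: "p \<in> pts u v \<Longrightarrow> shift v 0 p = p"
  by (cases p) (simp add: shift_def pts_def)

lemma shift_img_comp: "shift v a ` shift v b ` B = shift v (a + b) ` B"
  by (simp add: image_image shift_comp)

lemma shift_img_mod: "shift v (k mod v) ` B = shift v k ` B"
  by (simp add: shift_mod)

lemma shift_img_0: "B \<subseteq> pts u v \<Longrightarrow> shift v 0 ` B = B"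
proof -
  assume "B \<subseteq> pts u v"
  then have "\<forall>p\<in>B. shift v 0 p = p" using shift_0 by blast
  then show ?thesis by (simp add: image_cong[of B B "shift v 0" id])
qed

lemma shift_img_v: "B \<subseteq> pts u v \<Longrightarrow> shift v v ` B = B"
  using shift_img_mod[of v v B] shift_img_0[of B u v] by simp

lemma shift_pts: "0 < v \<Longrightarrow> p \<in> pts u v \<Longrightarrow> shift v r p \<in> pts u v"
  by (cases p) (simp add: shift_def pts_def)

lemma shift_inj: "inj_on (shift v r) (pts u v)"
proof (rule inj_onI)
  fix p q assume p: "p \<in> pts u v" and q: "q \<in> pts u v" and e: "shift v r p = shift v r q"
  have "shift v (v - r mod v) (shift v r p) = shift v (v - r mod v) (shift v r q)" using e by simp
  moreover have "shift v (v - r mod v) (shift v r x) = x" if "x \<in> pts u v" for x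
  proof -
    have v: "0 < v" using that by (auto simp: pts_def)
    have "shift v (v - r mod v) (shift v r x) = shift v (v - r mod v + r) x" by (simp add: shift_comp)
    also have "\<dots> = shift v ((v - r mod v + r) mod v) x" by (simp add: shift_mod)
    also have "(v - r mod v + r) mod v = 0"
    proof -
      have "(v - r mod v + r) mod v = (v - r mod v + r mod v) mod v" by (metis mod_add_right_eq)
      also have "v - r mod v + r mod v = v" using v by (simp add: less_imp_le)
      finally show ?thesis by simp
    qed
    finally show ?thesis using shift_0[OF that] by simp
  qed
  ultimately show "p = q" using p q by simp
qed

lemma orbit_dvd:
  assumes v: "0 < v" and fin: "finite Bs" and sub: "\<forall>B\<in>Bs. B \<subseteq> pts u v"
    and cl: "\<forall>B\<in>Bs. shift v 1 ` B \<in> Bs"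
    and strict: "\<forall>B\<in>Bs. \<forall>r<v. shift v r ` B = B \<longrightarrow> r = 0"
  shows "v dvd card Bs"
proof -
  define orb where "orb B = (\<lambda>r. shift v r ` B) ` {0..<v}" for B
  have inB: "shift v r ` B \<in> Bs" if "B \<in> Bs" for B r
  proof (induction r)
    case 0 then show ?case using that sub shift_img_0 by metis
  next
    case (Suc r)
    have "shift v (Suc r) ` B = shift v 1 ` shift v r ` B" by (simp add: shift_img_comp)
    then show ?case using cl Suc by simp
  qed
  have orb_sub: "orb B \<subseteq> Bs" if "B \<in> Bs" for B using inB that by (auto simp: orb_def)
  have orb_card: "card (orb B) = v" if B: "B \<in> Bs" for B
  proof -
    have "inj_on (\<lambda>r. shift v r ` B) {0..<v}"
    proof (rule inj_onI)
      have key: "r = s" if rs: "r < s" "s < v" "shift v r ` B = shift v s ` B" for r s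
      proof -
        have "shift v (v - r) ` shift v r ` B = shift v (v - r) ` shift v s ` B" using rs by simp
        then have "shift v (v - r + r) ` B = shift v (v - r + s) ` B" by (simp add: shift_img_comp)
        moreover have "v - r + r = v" using rs by simp
        moreover have "v - r + s = (s - r) + v" using rs by simp
        ultimately have "B = shift v ((s - r) + v) ` B" using shift_img_v sub B by metis
        also have "\<dots> = shift v (s - r) ` B"
          by (metis shift_img_mod mod_add_self2)
        finally have "shift v (s - r) ` B = B" by simp
        moreover have "s - r < v" using rs by simp
        ultimately have "s - r = 0" using strict B by blast
        then show ?thesis using rs by simp
      qed
      fix r s assume "r \<in> {0..<v}" "s \<in> {0..<v}" "shift v r ` B = shift v s ` B"
      then show "r = s" using key[of r s] key[of s r] by (cases r s rule: linorder_cases) auto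
    qed
    then show ?thesis unfolding orb_def by (simp add: card_image)
  qed
  have orb_mem: "orb B' \<subseteq> orb B" if H: "X \<in> orb B" "X \<in> orb B'" "B \<in> Bs" "B' \<in> Bs" for X B B'
  proof
    obtain r where r: "r < v" "X = shift v r ` B" using H(1) unfolding orb_def by auto
    obtain s where s: "s < v" "X = shift v s ` B'" using H(2) unfolding orb_def by auto
    have "shift v (v - s) ` X = shift v (v - s + s) ` B'" using s by (simp add: shift_img_comp)
    also have "\<dots> = B'" using s shift_img_v[of B' u v] sub H(4) by simp
    finally have B': "B' = shift v (v - s + r) ` B" using r by (simp add: shift_img_comp)
    fix Y assume "Y \<in> orb B'"
    then obtain t where t: "t < v" "Y = shift v t ` B'" by (auto simp: orb_def)
    then have "Y = shift v (t + (v - s + r)) ` B" using B' by (simp add: shift_img_comp)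
    also have "\<dots> = shift v ((t + (v - s + r)) mod v) ` B" by (simp add: shift_img_mod)
    finally show "Y \<in> orb B" unfolding orb_def using v by auto
  qed
  define Ob where "Ob = orb ` Bs"
  have U: "\<Union>Ob = Bs"
  proof
    show "\<Union>Ob \<subseteq> Bs" using orb_sub by (auto simp: Ob_def)
    show "Bs \<subseteq> \<Union>Ob"
    proof
      fix B assume B: "B \<in> Bs"
      have "B = shift v 0 ` B" using shift_img_0 sub B by metis
      then have "B \<in> orb B" using v unfolding orb_def by auto
      then show "B \<in> \<Union>Ob" using B by (auto simp: Ob_def)
    qed
  qed
  have "v * card Ob = card (\<Union>Ob)"
  proof (rule card_partition)
    show "finite Ob" using fin by (simp add: Ob_def)
    show "finite (\<Union>Ob)" using U fin by simp
    show "\<And>c. c \<in> Ob \<Longrightarrow> card c = v" using orb_card by (auto simp: Ob_def)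
    show "\<And>c1 c2. c1 \<in> Ob \<Longrightarrow> c2 \<in> Ob \<Longrightarrow> c1 \<noteq> c2 \<Longrightarrow> c1 \<inter> c2 = {}"
    proof -
      fix c1 c2 assume "c1 \<in> Ob" "c2 \<in> Ob" "c1 \<noteq> c2"
      then obtain B B' where "B \<in> Bs" "B' \<in> Bs" "c1 = orb B" "c2 = orb B'" "orb B \<noteq> orb B'"
        by (auto simp: Ob_def)
      then show "c1 \<inter> c2 = {}" using orb_mem by blast
    qed
  qed
  then show ?thesis using U by (metis dvd_triv_left)
qed
lemma lt24: "(a::nat) < 24 \<Longrightarrow> a = 0 \<or> a = 1 \<or> a = 2 \<or> a = 3 \<or> a = 4 \<or> a = 5 \<or> a = 6 \<or> a = 7 \<or> a = 8 \<or> a = 9 \<or> a = 10 \<or> a = 11 \<or> a = 12 \<or> a = 13 \<or> a = 14 \<or> a = 15 \<or> a = 16 \<or> a = 17 \<or> a = 18 \<or> a = 19 \<or> a = 20 \<or> a = 21 \<or> a = 22 \<or> a = 23"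
  by arith
lemma mod24: "(u::nat) mod 8 = u mod 24 mod 8" "u mod 3 = u mod 24 mod 3" "u mod 12 = u mod 24 mod 12"
   "u mod 6 = u mod 24 mod 6"
  by (simp_all add: mod_mod_cancel)
lemma h1r: "(r::nat) < 24 \<Longrightarrow> r mod 8 mod 4 = 1 \<Longrightarrow> r mod 3 \<noteq> 0 \<Longrightarrow> r mod 12 = 1 \<or> r mod 12 = 5"
  by (drule lt24, elim disjE, simp_all)
lemma h1: "(u::nat) mod 8 mod 4 = 1 \<Longrightarrow> u mod 3 \<noteq> 0 \<Longrightarrow> u mod 12 = 1 \<or> u mod 12 = 5"
  using h1r[of "u mod 24"] unfolding mod24[of u] by simp
lemma h2r: "(r::nat) < 24 \<Longrightarrow> r mod 8 mod 4 = 3 \<Longrightarrow> r mod 3 \<noteq> 0 \<Longrightarrow> r mod 12 = 7 \<or> r mod 12 = 11"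
  by (drule lt24, elim disjE, simp_all)
lemma h2: "(u::nat) mod 8 mod 4 = 3 \<Longrightarrow> u mod 3 \<noteq> 0 \<Longrightarrow> u mod 12 = 7 \<or> u mod 12 = 11"
  using h2r[of "u mod 24"] unfolding mod24[of u] by simp
lemma h3r: "(r::nat) < 24 \<Longrightarrow> r mod 8 = 2 \<Longrightarrow> r mod 3 \<noteq> 0 \<Longrightarrow> r = 2 \<or> r = 10"
  by (drule lt24, elim disjE, simp_all)
lemma h3: "(u::nat) mod 8 = 2 \<Longrightarrow> u mod 3 \<noteq> 0 \<Longrightarrow> u mod 24 = 2 \<or> u mod 24 = 10"
  using h3r[of "u mod 24"] unfolding mod24[of u] by simp
lemma h4r: "(r::nat) < 24 \<Longrightarrow> r mod 8 = 6 \<Longrightarrow> r mod 3 \<noteq> 0 \<Longrightarrow> r = 14 \<or> r = 22"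
  by (drule lt24, elim disjE, simp_all)
lemma h4: "(u::nat) mod 8 = 6 \<Longrightarrow> u mod 3 \<noteq> 0 \<Longrightarrow> u mod 24 = 14 \<or> u mod 24 = 22"
  using h4r[of "u mod 24"] unfolding mod24[of u] by simp
lemma h5r: "(r::nat) < 24 \<Longrightarrow> even (r mod 8) \<Longrightarrow> r mod 3 \<noteq> 0 \<Longrightarrow> r mod 6 = 2 \<or> r mod 6 = 4"
  by (drule lt24, elim disjE, simp_all)
lemma h5: "even ((u::nat) mod 8) \<Longrightarrow> u mod 3 \<noteq> 0 \<Longrightarrow> u mod 6 = 2 \<or> u mod 6 = 4"
  using h5r[of "u mod 24"] unfolding mod24[of u] by simp
lemma h6r: "(r::nat) < 24 \<Longrightarrow> odd (r mod 8) \<Longrightarrow> r mod 3 \<noteq> 0 \<Longrightarrow> r mod 6 = 1 \<or> r mod 6 = 5"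
  by (drule lt24, elim disjE, simp_all)
lemma h6: "odd ((u::nat) mod 8) \<Longrightarrow> u mod 3 \<noteq> 0 \<Longrightarrow> u mod 6 = 1 \<or> u mod 6 = 5"
  using h6r[of "u mod 24"] unfolding mod24[of u] by simp
lemma h7r: "(r::nat) < 24 \<Longrightarrow> r mod 8 mod 4 = 0 \<Longrightarrow> r mod 3 \<noteq> 0 \<Longrightarrow> r mod 12 = 4 \<or> r mod 12 = 8"
  by (drule lt24, elim disjE, simp_all)
lemma h7: "(u::nat) mod 8 mod 4 = 0 \<Longrightarrow> u mod 3 \<noteq> 0 \<Longrightarrow> u mod 12 = 4 \<or> u mod 12 = 8"
  using h7r[of "u mod 24"] unfolding mod24[of u] by simp
lemma lt8: "(a::nat) < 8 \<Longrightarrow> a = 0 \<or> a = 1 \<or> a = 2 \<or> a = 3 \<or> a = 4 \<or> a = 5 \<or> a = 6 \<or> a = 7"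
  by arith
lemma brute8: "(x::nat) < 8 \<Longrightarrow> (y::nat) < 8 \<Longrightarrow> even (x*y) \<Longrightarrow>
  (x * ((x*y + 7) mod 8) * ((x*y+6) mod 8)) mod 8 = 0 \<Longrightarrow>
  (x mod 4 = 1 \<and> y = 2) \<or> (x mod 4 = 3 \<and> y = 6) \<or> (even x \<and> odd y) \<or> (x mod 4 = 0 \<and> even y)"
  apply (drule lt8, drule lt8)
  apply (elim disjE)
  apply simp_all
  done
lemma m3: "(a*b*c) mod (k::nat) = ((a mod k)*(b mod k)*(c mod k)) mod k"
proof -
  have "(a*b*c) mod k = ((a*b) mod k * (c mod k)) mod k" by (simp add: mod_mult_eq)
  also have "(a*b) mod k = ((a mod k) * (b mod k)) mod k" by (simp add: mod_mult_eq)
  also have "((a mod k * (b mod k)) mod k * (c mod k)) mod k = ((a mod k)*(b mod k)*(c mod k)) mod k"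
    by (metis mod_mult_left_eq mult.assoc)
  finally show ?thesis .
qed

lemma e1:
  fixes u v n m x y :: nat
  assumes n: "n = u * v" "n = m + 2" and x: "x = u mod 8" and y: "y = v mod 8"
  shows "(u*(n-1)*(n-2)) mod 8 = (x * ((x*y + 7) mod 8) * ((x*y+6) mod 8)) mod 8"
proof -
  have xy: "(x*y) mod 8 = (m + 2) mod 8" using n x y by (simp add: mod_mult_eq)
  have b1: "(x*y + 7) mod 8 = (m + 1) mod 8"
  proof -
    have "(x*y + 7) mod 8 = ((x*y) mod 8 + 7) mod 8" by (simp add: mod_add_left_eq)
    also have "\<dots> = ((m + 2) mod 8 + 7) mod 8" using xy by simp
    also have "\<dots> = (m + 2 + 7) mod 8" by (rule mod_add_left_eq)
    also have "m + 2 + 7 = (m + 1) + 8" by simp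
    finally show ?thesis by (metis mod_add_self2)
  qed
  have b2: "(x*y + 6) mod 8 = m mod 8"
  proof -
    have "(x*y + 6) mod 8 = ((x*y) mod 8 + 6) mod 8" by (simp add: mod_add_left_eq)
    also have "\<dots> = ((m + 2) mod 8 + 6) mod 8" using xy by simp
    also have "\<dots> = (m + 2 + 6) mod 8" by (rule mod_add_left_eq)
    also have "m + 2 + 6 = m + 8" by simp
    finally show ?thesis by (metis mod_add_self2)
  qed
  have "n - 1 = m + 1" "n - 2 = m" using n(2) by simp_all
  then have "(u*(n-1)*(n-2)) mod 8 = (u*(m+1)*m) mod 8" by (simp only:)
  also have "\<dots> = ((u mod 8)*((m+1) mod 8)*(m mod 8)) mod 8" by (rule m3)
  also have "\<dots> = (x * ((x*y + 7) mod 8) * ((x*y+6) mod 8)) mod 8" using b1 b2 x by simp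
  finally show ?thesis .
qed

lemma final_arith:
  fixes u v :: nat
  assumes n2: "2 \<le> u*v" and m6: "u*v mod 6 = 2 \<or> u*v mod 6 = 4" and d24: "24 dvd u*(u*v-1)*(u*v-2)"
  shows "((u mod 12 \<in> {1, 5} \<and> v mod 24 \<in> {2, 10}) \<or>
       (u mod 12 \<in> {7, 11} \<and> v mod 24 \<in> {14, 22}) \<or>
       (u mod 6 \<in> {2, 4} \<and> v mod 6 \<in> {1, 5}) \<or>
       (u mod 12 \<in> {4, 8} \<and> v mod 6 \<in> {2, 4}))"
proof -
  define n where "n = u * v"
  have m6': "n mod 6 = 2 \<or> n mod 6 = 4" using m6 n_def by simp
  have n2': "2 \<le> n" using n2 n_def by simp
  have ev: "even n" using m6' by presburger
  have n3: "\<not> 3 dvd n" using m6' by presburger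
  have u3: "u mod 3 \<noteq> 0" using n3 unfolding n_def by (metis dvd_mult2 mod_0_imp_dvd)
  have v3: "v mod 3 \<noteq> 0" using n3 unfolding n_def by (metis dvd_mult mod_0_imp_dvd)
  define x where "x = u mod 8"
  define y where "y = v mod 8"
  define m where "m = n - 2"
  have nm: "n = m + 2" using n2' m_def by simp
  have d8: "(u*(n-1)*(n-2)) mod 8 = 0"
  proof -
    have "(8::nat) dvd 24" by simp
    then have "8 dvd u*(n-1)*(n-2)" using d24 unfolding n_def using dvd_trans by blast
    then show ?thesis by simp
  qed
  have e: "(x * ((x*y + 7) mod 8) * ((x*y+6) mod 8)) mod 8 = 0"
    using e1[OF n_def nm x_def y_def] d8 by simp
  have exy: "even (x*y)"
  proof -
    have "even u \<or> even v" using ev unfolding n_def by simp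
    moreover have "even x = even u" unfolding x_def by presburger
    moreover have "even y = even v" unfolding y_def by presburger
    ultimately show ?thesis by auto
  qed
  have "x < 8" "y < 8" unfolding x_def y_def by simp_all
  from brute8[OF this exy e] have D: "(u mod 8 mod 4 = 1 \<and> v mod 8 = 2) \<or> (u mod 8 mod 4 = 3 \<and> v mod 8 = 6) \<or> (even (u mod 8) \<and> odd (v mod 8)) \<or> (u mod 8 mod 4 = 0 \<and> even (v mod 8))"
    unfolding x_def y_def .
  then show ?thesis
  proof (elim disjE conjE)
    assume "u mod 8 mod 4 = 1" "v mod 8 = 2"
    then show ?thesis using h1[OF _ u3] h3[OF _ v3] by auto
  next
    assume "u mod 8 mod 4 = 3" "v mod 8 = 6"
    then show ?thesis using h2[OF _ u3] h4[OF _ v3] by auto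
  next
    assume "even (u mod 8)" "odd (v mod 8)"
    then show ?thesis using h5[OF _ u3] h6[OF _ v3] by auto
  next
    assume "u mod 8 mod 4 = 0" "even (v mod 8)"
    then show ?thesis using h7[OF _ u3] h5[OF _ v3] by auto
  qed
qed

theorem lemma3p5:
  fixes u v :: nat
  assumes nontriv: "2 \<le> u * v"
    and ex: "(\<exists>C. perfect_OOC u v C) \<or> (\<exists>\<B>. strictly_cyclic_SQS u v \<B>)"
  shows "(u * v mod 6 = 2 \<or> u * v mod 6 = 4) \<and> 24 dvd u * (u * v - 1) * (u * v - 2)
    \<and> ((u mod 12 \<in> {1, 5} \<and> v mod 24 \<in> {2, 10}) \<or>
       (u mod 12 \<in> {7, 11} \<and> v mod 24 \<in> {14, 22}) \<or>
       (u mod 6 \<in> {2, 4} \<and> v mod 6 \<in> {1, 5}) \<or>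
       (u mod 12 \<in> {4, 8} \<and> v mod 6 \<in> {2, 4}))"
proof -
  have v: "0 < v" using nontriv by (cases v) auto
  have fP: "finite (pts u v)" by (simp add: pts_def)
  have cP: "card (pts u v) = u * v" by (simp add: pts_def card_cartesian_product)
  have n2: "2 \<le> card (pts u v)" using cP nontriv by simp
  have F: "(u * v mod 6 = 2 \<or> u * v mod 6 = 4) \<and> 24 dvd u * (u * v - 1) * (u * v - 2)"
    using ex
  proof (elim disjE exE)
    fix C assume pc: "perfect_OOC u v C"
    then have oc: "is_OOC u v C" by (simp add: perfect_OOC_def)
    have Csub: "\<And>A. A \<in> C \<Longrightarrow> A \<subseteq> pts u v \<and> card A = 4" using oc by (simp add: is_OOC_def)
    have fC: "finite C"
    proof (rule finite_subset)
      show "C \<subseteq> Pow (pts u v)" using Csub by auto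
      show "finite (Pow (pts u v))" using fP by simp
    qed
    define I where "I = C \<times> {0..<v}"
    define g where "g = (\<lambda>(A, r). shift v r ` A)"
    have fI: "finite I" using fC by (simp add: I_def)
    have gP: "g i \<subseteq> pts u v" if iI: "i \<in> I" for i
    proof -
      obtain A r where i: "i = (A, r)" "A \<in> C" using iI unfolding I_def by blast
      show ?thesis
      proof
        fix p assume "p \<in> g i"
        then obtain q where q: "q \<in> A" "p = shift v r q" using i by (auto simp: g_def)
        then have "q \<in> pts u v" using Csub[OF i(2)] by blast
        then show "p \<in> pts u v" using q shift_pts[OF v] by blast
      qed
    qed
    have g4: "card (g i) = 4" if iI: "i \<in> I" for i
    proof -
      obtain A r where i: "i = (A, r)" "A \<in> C" using iI unfolding I_def by blast
      have "inj_on (shift v r) A" using Csub[OF i(2)] shift_inj by (blast intro: inj_on_subset)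
      then show ?thesis using i Csub[OF i(2)] by (simp add: g_def card_image)
    qed
    have uniq: "card {i\<in>I. T \<subseteq> g i} = 1" if "T \<subseteq> pts u v" "card T = 3" for T
    proof -
      have "{i\<in>I. T \<subseteq> g i} = {(A, r). A \<in> C \<and> r < v \<and> T \<subseteq> shift v r ` A}"
        by (auto simp: I_def g_def)
      then show ?thesis using pc that by (simp add: perfect_OOC_def)
    qed
    note df = design_facts[OF fP fI gP g4 uniq n2]
    have cI: "card I = card C * v" by (simp add: I_def card_cartesian_product)
    have "v * (u * (u*v - 1) * (u*v - 2)) = u*v*(u*v-1)*(u*v-2)" by (simp only: ac_simps)
    also have "\<dots> = 24 * (card C * v)" using df(2) unfolding cP cI .
    also have "\<dots> = v * (24 * card C)" by (simp only: ac_simps)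
    finally have "v * (u * (u*v - 1) * (u*v - 2)) = v * (24 * card C)" .
    then have "u * (u*v - 1) * (u*v - 2) = 24 * card C"
      using iffD1[OF mult_left_cancel[of v]] v by blast
    then have "24 dvd u * (u*v - 1) * (u*v - 2)" by (metis dvd_triv_left)
    then show ?thesis using df(1) unfolding cP by blast
  next
    fix Bs assume sq: "strictly_cyclic_SQS u v Bs"
    have Bsub: "\<And>B. B \<in> Bs \<Longrightarrow> B \<subseteq> pts u v \<and> card B = 4" using sq by (simp add: strictly_cyclic_SQS_def)
    have fB: "finite Bs"
    proof (rule finite_subset)
      show "Bs \<subseteq> Pow (pts u v)" using Bsub by auto
      show "finite (Pow (pts u v))" using fP by simp
    qed
    have uniq: "card {i\<in>Bs. T \<subseteq> id i} = 1" if "T \<subseteq> pts u v" "card T = 3" for T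
    proof -
      from sq that obtain B0 where B0: "B0 \<in> Bs \<and> T \<subseteq> B0" "\<And>B. B \<in> Bs \<and> T \<subseteq> B \<Longrightarrow> B = B0"
        unfolding strictly_cyclic_SQS_def by metis
      have "{i\<in>Bs. T \<subseteq> id i} = {B0}"
      proof
        show "{i\<in>Bs. T \<subseteq> id i} \<subseteq> {B0}"
        proof
          fix i assume "i \<in> {i\<in>Bs. T \<subseteq> id i}"
          then have "i \<in> Bs \<and> T \<subseteq> i" unfolding mem_Collect_eq id_def .
          then have "i = B0" by (rule B0(2))
          then show "i \<in> {B0}" by (rule ssubst) (rule singletonI)
        qed
        show "{B0} \<subseteq> {i\<in>Bs. T \<subseteq> id i}"
        proof
          fix i assume "i \<in> {B0}"
          then have "i = B0" by (rule singletonD)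
          then show "i \<in> {i\<in>Bs. T \<subseteq> id i}" using B0(1) unfolding mem_Collect_eq id_def by (rule ssubst)
        qed
      qed
      then show ?thesis by simp
    qed
    have gP: "id i \<subseteq> pts u v" if "i \<in> Bs" for i using Bsub that by simp
    have g4: "card (id i) = 4" if "i \<in> Bs" for i using Bsub that by simp
    note df = design_facts[OF fP fB gP g4 uniq n2]
    have "v dvd card Bs"
      using sq v fB by (intro orbit_dvd[of v Bs u]) (auto simp: strictly_cyclic_SQS_def)
    then obtain k where k: "card Bs = v * k" by blast
    have "v * (u * (u*v - 1) * (u*v - 2)) = u*v*(u*v-1)*(u*v-2)" by (simp only: ac_simps)
    also have "\<dots> = 24 * (v * k)" using df(2) unfolding cP k .
    also have "\<dots> = v * (24 * k)" by (simp only: ac_simps)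
    finally have "v * (u * (u*v - 1) * (u*v - 2)) = v * (24 * k)" .
    then have "u * (u*v - 1) * (u*v - 2) = 24 * k"
      using iffD1[OF mult_left_cancel[of v]] v by blast
    then have "24 dvd u * (u*v - 1) * (u*v - 2)" by (metis dvd_triv_left)
    then show ?thesis using df(1) unfolding cP by blast
  qed
  then show ?thesis using final_arith[OF nontriv] by blast
qed

end
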